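(* Let $J$ be a finite set and let $V=\bigoplus_{i,j\in J}V_{ij}$ be a connected bi-$J$-graded finite dimensional vector space, and let $\Gamma$ be the directed graph with vertex set $J$ whose edges from $i$ to $j$ form a chosen basis of $V_{ij}$. Then the monoidal algebra $\mathcal{P}(\mathrm{Vec}(J\times J),V)_{\bullet\to\bullet}$, given by $\mathcal{P}_{m\to n}=\mathrm{Hom}_{\mathrm{Vec}(J\times J)}(V^{\otimes m}\to V^{\otimes n})$ with tangles acting by the graphical calculus, is isomorphic to the graph monoidal algebra $\mathcal{GMA}(\Gamma)_{\bullet\to\bullet}$.
   Context: $\mathrm{Vec}(J\times J)$ is the tensor category of finite dimensional bi-$J$-graded vector spaces $V=\bigoplus_{i,j}V_{ij}$ with grading-preserving linear maps and tensor product $(V\otimes W)_{ik}=\bigoplus_{j}V_{ij}\otimes W_{jk}$. $V$ is connected if for all $i,k\in J$ there is a sequence $i=j_0,\dots,j_n=k$ with $V_{j_{\ell-1}j_\ell}\ne0$. A monoidal tangle (single label) is a rectangle with finitely many rectangles removed and non-crossing strings, oriented upward with no local maxima or minima, beginning and ending on tops/bottoms of rectangles, up to such isotopy; monoidal tangles form a colored operad by insertion. A monoidal algebra is a family of vector spaces $\mathcal{P}_{m\to n}$ ($m,n\ge0$) with a multilinear action of monoidal tangles (a tangle with $k$ inputs having $m_i$ strings at the bottom and $n_i$ at the top of the $i$th input gives a map $\prod_i\mathcal{P}_{m_i\to n_i}\to\mathcal{P}_{m_0\to n_0}$) compatible with composition. An isomorphism of monoidal algebras is a family of linear isomorphisms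 intertwining all tangle actions. The graph monoidal algebra $\mathcal{GMA}(\Gamma)_{m\to n}$ has basis the pairs $(p,q)$ of paths in $\Gamma$ of lengths $m,n$ with the same source and same target; a tangle $T$ acts by $T((p_1,q_1),\dots,(p_k,q_k))=\sum_\sigma\prod_i\delta_{\sigma|_i=(p_i,q_i)}\,\sigma|_0$, the sum over states $\sigma$ (assignments of vertices to regions and edges to strings such that a string labelled $\varepsilon$ has $s(\varepsilon)$ on its left region and $t(\varepsilon)$ on its right), where $\sigma|_i$ is the pair of paths read left to right along the bottom and top of the $i$th rectangle. *)

theory Defs
  imports Main
begin

text \<open>Vertices: a finite type 'j (the finite set J). Edges: a finite type 'e with
source s and target t. The bi-graded space V has V_ij = functions 'e => 'k supported on the
edges from i to j; the indicator functions of edges are the chosen basis.\<close>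

definition Vcomp :: "('e \<Rightarrow> 'j) \<Rightarrow> ('e \<Rightarrow> 'j) \<Rightarrow> 'j \<Rightarrow> 'j \<Rightarrow> ('e \<Rightarrow> 'k::zero) set" where
  "Vcomp s t i j = {x. \<forall>e. x e \<noteq> 0 \<longrightarrow> s e = i \<and> t e = j}"

definition connected_bigraded :: "('j \<Rightarrow> 'j \<Rightarrow> ('e \<Rightarrow> 'k::zero) set) \<Rightarrow> bool" where
  "connected_bigraded W \<longleftrightarrow>
     (\<forall>i k. \<exists>js. js \<noteq> [] \<and> hd js = i \<and> last js = k \<and>
        (\<forall>u. Suc u < length js \<longrightarrow> W (js ! u) (js ! Suc u) \<noteq> {\<lambda>_. 0}))"

fun walk :: "('e \<Rightarrow> 'j) \<Rightarrow> ('e \<Rightarrow> 'j) \<Rightarrow> 'j \<Rightarrow> 'e list \<Rightarrow> bool" where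
  "walk s t v [] = True"
| "walk s t v (e # es) = (s e = v \<and> walk s t (t e) es)"

fun endv :: "('e \<Rightarrow> 'j) \<Rightarrow> 'j \<Rightarrow> 'e list \<Rightarrow> 'j" where
  "endv t v [] = v"
| "endv t v (e # es) = endv t (t e) es"

text \<open>A path is a start vertex together with a list of edges (so length-0 paths are vertices).\<close>
definition paths :: "('e \<Rightarrow> 'j) \<Rightarrow> ('e \<Rightarrow> 'j) \<Rightarrow> nat \<Rightarrow> ('j \<times> 'e list) set" where
  "paths s t m = {(v, es). length es = m \<and> walk s t v es}"

definition psrc :: "('j \<times> 'e list) \<Rightarrow> 'j" where
  "psrc p = fst p"

definition ptgt :: "('e \<Rightarrow> 'j) \<Rightarrow> ('j \<times> 'e list) \<Rightarrow> 'j" where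
  "ptgt t p = endv t (fst p) (snd p)"

definition subpath :: "('e \<Rightarrow> 'j) \<Rightarrow> nat \<Rightarrow> nat \<Rightarrow> ('j \<times> 'e list) \<Rightarrow> ('j \<times> 'e list)" where
  "subpath t l m p = (endv t (fst p) (take l (snd p)), take m (drop l (snd p)))"

text \<open>V^{tensor m} has basis the paths of length m (e_{p} tensor e_{p'} = e_{pp'} if composable,
  and 0 otherwise, by the definition of the tensor product of Vec(J x J)).
  Vectors are functions on paths supported on paths of length m.\<close>
definition tpow :: "('e \<Rightarrow> 'j) \<Rightarrow> ('e \<Rightarrow> 'j) \<Rightarrow> nat \<Rightarrow> (('j \<times> 'e list) \<Rightarrow> 'k::zero) set" where
  "tpow s t m = {x. \<forall>p. x p \<noteq> 0 \<longrightarrow> p \<in> paths s t m}"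

definition tcomp :: "('e \<Rightarrow> 'j) \<Rightarrow> ('e \<Rightarrow> 'j) \<Rightarrow> nat \<Rightarrow> 'j \<Rightarrow> 'j \<Rightarrow> (('j \<times> 'e list) \<Rightarrow> 'k::zero) set" where
  "tcomp s t m i k = {x \<in> tpow s t m. \<forall>p. x p \<noteq> 0 \<longrightarrow> psrc p = i \<and> ptgt t p = k}"

text \<open>P_{m->n} = Hom_{Vec(J x J)}(V^{tensor m}, V^{tensor n}): grading-preserving linear maps
  (taken extensional, i.e. 0 outside V^{tensor m}).\<close>
definition homP :: "('e \<Rightarrow> 'j) \<Rightarrow> ('e \<Rightarrow> 'j) \<Rightarrow> nat \<Rightarrow> nat
    \<Rightarrow> ((('j \<times> 'e list) \<Rightarrow> 'k::field) \<Rightarrow> (('j \<times> 'e list) \<Rightarrow> 'k)) set" where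
  "homP s t m n = {f.
      (\<forall>x \<in> tpow s t m. f x \<in> tpow s t n) \<and>
      (\<forall>x \<in> tpow s t m. \<forall>y \<in> tpow s t m. f (\<lambda>p. x p + y p) = (\<lambda>q. f x q + f y q)) \<and>
      (\<forall>c. \<forall>x \<in> tpow s t m. f (\<lambda>p. c * x p) = (\<lambda>q. c * f x q)) \<and>
      (\<forall>i k. \<forall>x \<in> tcomp s t m i k. f x \<in> tcomp s t n i k) \<and>
      (\<forall>x. x \<notin> tpow s t m \<longrightarrow> f x = (\<lambda>_. 0))}"

definition basisvec :: "('j \<times> 'e list) \<Rightarrow> (('j \<times> 'e list) \<Rightarrow> 'k::{zero,one})" where
  "basisvec p = (\<lambda>u. if u = p then 1 else 0)"

text \<open>id_{V^{tensor l}} tensor f tensor id_{V^{tensor r}} : V^{tensor (l+m+r)} -> V^{tensor (l+n+r)},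
  computed on the path bases: (id tensor f tensor id)(e_a tensor e_p tensor e_b)
  = e_a tensor f(e_p) tensor e_b.\<close>
definition layer_app :: "('e \<Rightarrow> 'j) \<Rightarrow> ('e \<Rightarrow> 'j) \<Rightarrow> nat \<Rightarrow> nat \<Rightarrow> nat \<Rightarrow> nat
    \<Rightarrow> ((('j \<times> 'e list) \<Rightarrow> 'k::field) \<Rightarrow> (('j \<times> 'e list) \<Rightarrow> 'k))
    \<Rightarrow> (('j \<times> 'e list) \<Rightarrow> 'k) \<Rightarrow> (('j \<times> 'e list) \<Rightarrow> 'k)" where
  "layer_app s t l r m n f x = (\<lambda>z.
     if z \<in> paths s t (l + n + r) then
       (\<Sum>p \<in> {p \<in> paths s t m. psrc p = psrc (subpath t l n z)
                                 \<and> ptgt t p = ptgt t (subpath t l n z)}.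
          x (fst z, take l (snd z) @ snd p @ drop (l + n) (snd z)) * f (basisvec p) (subpath t l n z))
     else 0)"

text \<open>A monoidal tangle with k inputs is presented (up to isotopy) by a list of layers (l,i,r):
  from bottom to top, input rectangle i is placed with l strings to its left and r strings
  to its right. ins ! i = (m_i, n_i) gives the numbers of bottom/top strings of input i;
  the output rectangle has m0 strings at the bottom and n0 at the top. Every monoidal tangle
  has such a presentation (put the input rectangles at distinct heights).\<close>

fun widths_ok :: "(nat \<times> nat) list \<Rightarrow> nat \<Rightarrow> (nat \<times> nat \<times> nat) list \<Rightarrow> nat \<Rightarrow> bool" where
  "widths_ok ins w [] n0 = (w = n0)"
| "widths_ok ins w ((l, i, r) # Ls) n0 =
     (i < length ins \<and> l + fst (ins ! i) + r = w \<and> widths_ok ins (l + snd (ins ! i) + r) Ls n0)"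

definition wf_tangle :: "(nat \<times> nat) list \<Rightarrow> (nat \<times> nat \<times> nat) list \<Rightarrow> nat \<Rightarrow> nat \<Rightarrow> bool" where
  "wf_tangle ins Ls m0 n0 \<longleftrightarrow>
     distinct (map (\<lambda>(l, i, r). i) Ls) \<and> set (map (\<lambda>(l, i, r). i) Ls) = {..<length ins} \<and>
     widths_ok ins m0 Ls n0"

fun actP_layers :: "('e \<Rightarrow> 'j) \<Rightarrow> ('e \<Rightarrow> 'j) \<Rightarrow> (nat \<times> nat) list
    \<Rightarrow> (nat \<Rightarrow> ((('j \<times> 'e list) \<Rightarrow> 'k::field) \<Rightarrow> (('j \<times> 'e list) \<Rightarrow> 'k)))
    \<Rightarrow> (nat \<times> nat \<times> nat) list \<Rightarrow> (('j \<times> 'e list) \<Rightarrow> 'k) \<Rightarrow> (('j \<times> 'e list) \<Rightarrow> 'k)" where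
  "actP_layers s t ins fs [] x = x"
| "actP_layers s t ins fs ((l, i, r) # Ls) x =
     actP_layers s t ins fs Ls (layer_app s t l r (fst (ins ! i)) (snd (ins ! i)) (fs i) x)"

definition actP :: "('e \<Rightarrow> 'j) \<Rightarrow> ('e \<Rightarrow> 'j) \<Rightarrow> (nat \<times> nat) list \<Rightarrow> (nat \<times> nat \<times> nat) list \<Rightarrow> nat
    \<Rightarrow> (nat \<Rightarrow> ((('j \<times> 'e list) \<Rightarrow> 'k::field) \<Rightarrow> (('j \<times> 'e list) \<Rightarrow> 'k)))
    \<Rightarrow> ((('j \<times> 'e list) \<Rightarrow> 'k) \<Rightarrow> (('j \<times> 'e list) \<Rightarrow> 'k))" where
  "actP s t ins Ls m0 fs = (\<lambda>x. if x \<in> tpow s t m0 then actP_layers s t ins fs Ls x else (\<lambda>_. 0))"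

text \<open>GMA_{m->n}: vector space with basis the pairs (p,q), p of length m, q of length n,
  same source and same target; elements are coefficient functions.\<close>
definition gma :: "('e \<Rightarrow> 'j) \<Rightarrow> ('e \<Rightarrow> 'j) \<Rightarrow> nat \<Rightarrow> nat
    \<Rightarrow> ((('j \<times> 'e list) \<times> ('j \<times> 'e list)) \<Rightarrow> 'k::zero) set" where
  "gma s t m n = {c. \<forall>p q. c (p, q) \<noteq> 0 \<longrightarrow>
      p \<in> paths s t m \<and> q \<in> paths s t n \<and> psrc p = psrc q \<and> ptgt t p = ptgt t q}"

text \<open>States of a layered tangle: the paths read along horizontal lines between consecutive
  layers (sigma_0 at the bottom of the output rectangle, the last one at its top). Across
  layer (l,i,r), the l leftmost and r rightmost strings, and the leftmost/rightmost regions,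
  are unchanged, and the input rectangle i reads (bottom, top) = (p_i, q_i).\<close>
definition layer_ok :: "('e \<Rightarrow> 'j) \<Rightarrow> ('e \<Rightarrow> 'j) \<Rightarrow> nat \<Rightarrow> nat \<Rightarrow> nat \<Rightarrow> nat
    \<Rightarrow> ('j \<times> 'e list) \<Rightarrow> ('j \<times> 'e list) \<Rightarrow> bool" where
  "layer_ok s t l r m n \<sigma> \<sigma>' \<longleftrightarrow>
     \<sigma> \<in> paths s t (l + m + r) \<and> \<sigma>' \<in> paths s t (l + n + r) \<and>
     fst \<sigma> = fst \<sigma>' \<and> ptgt t \<sigma> = ptgt t \<sigma>' \<and>
     take l (snd \<sigma>) = take l (snd \<sigma>') \<and> drop (l + m) (snd \<sigma>) = drop (l + n) (snd \<sigma>')"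

definition gma_states :: "('e \<Rightarrow> 'j) \<Rightarrow> ('e \<Rightarrow> 'j) \<Rightarrow> (nat \<times> nat) list \<Rightarrow> (nat \<times> nat \<times> nat) list
    \<Rightarrow> nat \<Rightarrow> ('j \<times> 'e list) list set" where
  "gma_states s t ins Ls m0 = {\<sigma>s. length \<sigma>s = Suc (length Ls) \<and> \<sigma>s ! 0 \<in> paths s t m0 \<and>
     (\<forall>u < length Ls. case Ls ! u of (l, i, r) \<Rightarrow>
         layer_ok s t l r (fst (ins ! i)) (snd (ins ! i)) (\<sigma>s ! u) (\<sigma>s ! Suc u))}"

text \<open>The restriction sigma|_u of a state to the input rectangle placed in layer u.\<close>
definition box_state :: "('e \<Rightarrow> 'j) \<Rightarrow> (nat \<times> nat) list \<Rightarrow> (nat \<times> nat \<times> nat) list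
    \<Rightarrow> ('j \<times> 'e list) list \<Rightarrow> nat \<Rightarrow> ('j \<times> 'e list) \<times> ('j \<times> 'e list)" where
  "box_state t ins Ls \<sigma>s u = (case Ls ! u of (l, i, r) \<Rightarrow>
      (subpath t l (fst (ins ! i)) (\<sigma>s ! u), subpath t l (snd (ins ! i)) (\<sigma>s ! Suc u)))"

text \<open>Multilinear extension of
  T((p_1,q_1),...,(p_k,q_k)) = sum_sigma prod_i delta_{sigma|_i = (p_i,q_i)} sigma|_0.\<close>
definition actG :: "('e \<Rightarrow> 'j) \<Rightarrow> ('e \<Rightarrow> 'j) \<Rightarrow> (nat \<times> nat) list \<Rightarrow> (nat \<times> nat \<times> nat) list \<Rightarrow> nat
    \<Rightarrow> (nat \<Rightarrow> ((('j \<times> 'e list) \<times> ('j \<times> 'e list)) \<Rightarrow> 'k::field))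
    \<Rightarrow> ((('j \<times> 'e list) \<times> ('j \<times> 'e list)) \<Rightarrow> 'k)" where
  "actG s t ins Ls m0 cs = (\<lambda>(p0, q0).
      \<Sum>\<sigma>s \<in> {\<sigma>s \<in> gma_states s t ins Ls m0. \<sigma>s ! 0 = p0 \<and> last \<sigma>s = q0}.
        \<Prod>u < length Ls. cs (case Ls ! u of (l, i, r) \<Rightarrow> i) (box_state t ins Ls \<sigma>s u))"

definition monoidal_iso_P_GMA :: "('e \<Rightarrow> 'j) \<Rightarrow> ('e \<Rightarrow> 'j)
    \<Rightarrow> (nat \<Rightarrow> nat \<Rightarrow> ((('j \<times> 'e list) \<Rightarrow> 'k::field) \<Rightarrow> (('j \<times> 'e list) \<Rightarrow> 'k))
         \<Rightarrow> ((('j \<times> 'e list) \<times> ('j \<times> 'e list)) \<Rightarrow> 'k)) \<Rightarrow> bool" where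
  "monoidal_iso_P_GMA s t \<Phi> \<longleftrightarrow>
     (\<forall>m n. bij_betw (\<Phi> m n) (homP s t m n) (gma s t m n) \<and>
        (\<forall>f \<in> homP s t m n. \<forall>g \<in> homP s t m n.
            \<Phi> m n (\<lambda>x q. f x q + g x q) = (\<lambda>b. \<Phi> m n f b + \<Phi> m n g b)) \<and>
        (\<forall>c. \<forall>f \<in> homP s t m n. \<Phi> m n (\<lambda>x q. c * f x q) = (\<lambda>b. c * \<Phi> m n f b))) \<and>
     (\<forall>ins Ls m0 n0 fs. wf_tangle ins Ls m0 n0 \<and>
        (\<forall>i < length ins. fs i \<in> homP s t (fst (ins ! i)) (snd (ins ! i))) \<longrightarrow>
        \<Phi> m0 n0 (actP s t ins Ls m0 fs) =
          actG s t ins Ls m0 (\<lambda>i. \<Phi> (fst (ins ! i)) (snd (ins ! i)) (fs i)))"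

end

theory Submission
  imports Defs
begin

lemma walk_append: "walk s t v (xs @ ys) = (walk s t v xs \<and> walk s t (endv t v xs) ys)"
  by (induction xs arbitrary: v) auto

lemma endv_append: "endv t v (xs @ ys) = endv t (endv t v xs) ys"
  by (induction xs arbitrary: v) auto

lemma walk_endv_inj: "walk s t a D \<Longrightarrow> walk s t b D \<Longrightarrow> endv t a D = endv t b D \<Longrightarrow> a = b"
  by (cases D) auto

lemma finite_paths: "finite (paths (s::'e::finite \<Rightarrow> 'j::finite) t m)"
proof -
  have "paths s t m \<subseteq> UNIV \<times> {es. set es \<subseteq> UNIV \<and> length es = m}"
    by (auto simp: paths_def)
  moreover have "finite (UNIV \<times> {es::'e list. set es \<subseteq> UNIV \<and> length es = m} :: ('j \<times> 'e list) set)"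
    by (intro finite_cartesian_product finite_lists_length_eq) auto
  ultimately show ?thesis by (rule finite_subset)
qed

definition PhiM :: "nat \<Rightarrow> nat \<Rightarrow> ((('j \<times> 'e list) \<Rightarrow> 'k::field) \<Rightarrow> (('j \<times> 'e list) \<Rightarrow> 'k))
              \<Rightarrow> ((('j \<times> 'e list) \<times> ('j \<times> 'e list)) \<Rightarrow> 'k)" where
  "PhiM m n f = (\<lambda>(p, q). f (basisvec p) q)"

lemma basisvec_tpow: "(basisvec p :: _ \<Rightarrow> 'k::zero_neq_one) \<in> tpow s t m \<longleftrightarrow> p \<in> paths s t m"
  unfolding tpow_def basisvec_def mem_Collect_eq
  by (metis zero_neq_one)

lemma homP_zero:
  assumes "f \<in> homP s t m n"
  shows "f (\<lambda>_. 0) = (\<lambda>_. 0)"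
proof -
  have z: "(\<lambda>_. 0) \<in> tpow s t m" by (simp add: tpow_def)
  from assms have H: "\<forall>c. \<forall>x\<in>tpow s t m. f (\<lambda>p. c * x p) = (\<lambda>q. c * f x q)"
    unfolding homP_def by blast
  show ?thesis using H[rule_format, of "\<lambda>_. 0" 0] z by simp
qed

lemma homP_add:
  assumes "f \<in> homP s t m n" "x \<in> tpow s t m" "y \<in> tpow s t m"
  shows "f (\<lambda>p. x p + y p) = (\<lambda>q. f x q + f y q)"
  using assms unfolding homP_def by blast

lemma homP_smult:
  assumes "f \<in> homP s t m n" "x \<in> tpow s t m"
  shows "f (\<lambda>p. c * x p) = (\<lambda>q. c * f x q)"
  using assms unfolding homP_def by blast

lemma homP_sum:
  fixes f :: "(('j \<times> 'e list) \<Rightarrow> 'k::field) \<Rightarrow> (('j \<times> 'e list) \<Rightarrow> 'k)"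
  assumes f: "f \<in> homP s t m n" and S: "finite S" "S \<subseteq> paths s t m"
  shows "f (\<lambda>u. \<Sum>p\<in>S. x p * basisvec p u) = (\<lambda>q. \<Sum>p\<in>S. x p * f (basisvec p) q)"
  using S
proof (induction S rule: finite_induct)
  case empty
  then show ?case using homP_zero[OF f] by simp
next
  case (insert a S)
  have "(\<Sum>p\<in>S. x p * basisvec p u) = 0" if "u \<notin> S" for u
    using that by (auto simp: basisvec_def intro!: sum.neutral)
  then have inS: "(\<lambda>u. \<Sum>p\<in>S. x p * basisvec p u) \<in> tpow s t m"
    using insert unfolding tpow_def by blast
  have "a \<in> paths s t m" using insert by blast
  then have ba: "(basisvec a :: _ \<Rightarrow> 'k) \<in> tpow s t m" by (simp only: basisvec_tpow)
  have sc: "(\<lambda>u. x a * basisvec a u) \<in> tpow s t m" using ba by (auto simp: tpow_def)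
  have "f (\<lambda>u. \<Sum>p\<in>insert a S. x p * basisvec p u)
      = f (\<lambda>u. (\<lambda>u. x a * basisvec a u) u + (\<lambda>u. \<Sum>p\<in>S. x p * basisvec p u) u)"
    using insert by simp
  also have "\<dots> = (\<lambda>q. f (\<lambda>u. x a * basisvec a u) q + f (\<lambda>u. \<Sum>p\<in>S. x p * basisvec p u) q)"
    using homP_add[OF f sc inS] by simp
  also have "f (\<lambda>u. x a * basisvec a u) = (\<lambda>q. x a * f (basisvec a) q)"
    using homP_smult[OF f ba] by simp
  finally show ?case using insert by simp
qed

lemma tpow_expand:
  fixes x :: "('j::finite \<times> 'e::finite list) \<Rightarrow> 'k::field"
  assumes "x \<in> tpow s t m"
  shows "x = (\<lambda>u. \<Sum>p\<in>paths s t m. x p * basisvec p u)"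
proof
  fix u
  have "(\<Sum>p\<in>paths s t m. x p * basisvec p u) = (if u \<in> paths s t m then x u else 0)"
    by (simp add: basisvec_def finite_paths if_distrib cong: if_cong)
  moreover have "u \<notin> paths s t m \<Longrightarrow> x u = 0" using assms unfolding tpow_def by blast
  ultimately show "x u = (\<Sum>p\<in>paths s t m. x p * basisvec p u)"
    by auto
qed

lemma homP_expand:
  fixes f :: "(('j::finite \<times> 'e::finite list) \<Rightarrow> 'k::field) \<Rightarrow> (('j \<times> 'e list) \<Rightarrow> 'k)"
  assumes f: "f \<in> homP s t m n" and x: "x \<in> tpow s t m"
  shows "f x = (\<lambda>q. \<Sum>p\<in>paths s t m. x p * f (basisvec p) q)"
proof -
  have "f x = f (\<lambda>u. \<Sum>p\<in>paths s t m. x p * basisvec p u)"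
    using tpow_expand[OF x] by simp
  also have "\<dots> = (\<lambda>q. \<Sum>p\<in>paths s t m. x p * f (basisvec p) q)"
    by (rule homP_sum[OF f finite_paths]) simp
  finally show ?thesis .
qed

definition mkhom :: "('e \<Rightarrow> 'j) \<Rightarrow> ('e \<Rightarrow> 'j) \<Rightarrow> nat \<Rightarrow> ((('j \<times> 'e list) \<times> ('j \<times> 'e list)) \<Rightarrow> 'k::field)
   \<Rightarrow> (('j \<times> 'e list) \<Rightarrow> 'k) \<Rightarrow> (('j \<times> 'e list) \<Rightarrow> 'k)" where
  "mkhom s t m c = (\<lambda>x. if x \<in> tpow s t m then (\<lambda>q. \<Sum>p\<in>paths s t m. x p * c (p, q)) else (\<lambda>_. 0))"

lemma sum_nonzero_ex: "(\<Sum>p\<in>A. g p) \<noteq> (0::'a::comm_monoid_add) \<Longrightarrow> \<exists>p\<in>A. g p \<noteq> 0"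
  by (meson sum.neutral)

lemma mkhom_homP:
  fixes c :: "(('j::finite \<times> 'e::finite list) \<times> ('j \<times> 'e list)) \<Rightarrow> 'k::field"
  assumes c: "c \<in> gma s t m n"
  shows "mkhom s t m c \<in> homP s t m n"
proof -
  have into: "mkhom s t m c x \<in> tpow s t n" for x
  proof -
    have "q \<in> paths s t n" if "mkhom s t m c x q \<noteq> 0" for q
    proof -
      from that have "x \<in> tpow s t m" and "(\<Sum>p\<in>paths s t m. x p * c (p, q)) \<noteq> 0"
        by (auto simp: mkhom_def split: if_splits)
      then obtain p where "c (p, q) \<noteq> 0" using sum_nonzero_ex by force
      then show ?thesis using c unfolding gma_def by blast
    qed
    then show ?thesis unfolding tpow_def by blast
  qed
  have add: "mkhom s t m c (\<lambda>p. x p + y p) = (\<lambda>q. mkhom s t m c x q + mkhom s t m c y q)"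
    if "x \<in> tpow s t m" "y \<in> tpow s t m" for x y
  proof -
    have "(\<lambda>p. x p + y p) \<in> tpow s t m" using that unfolding tpow_def mem_Collect_eq
      by (metis add.right_neutral)
    then show ?thesis using that
      by (simp add: mkhom_def distrib_right sum.distrib)
  qed
  have sc: "mkhom s t m c (\<lambda>p. a * x p) = (\<lambda>q. a * mkhom s t m c x q)"
    if "x \<in> tpow s t m" for x a
  proof -
    have "(\<lambda>p. a * x p) \<in> tpow s t m" using that by (auto simp: tpow_def)
    then show ?thesis using that
      by (simp add: mkhom_def sum_distrib_left mult.assoc)
  qed
  have gr: "mkhom s t m c x \<in> tcomp s t n i k" if "x \<in> tcomp s t m i k" for x i k
  proof -
    have x: "x \<in> tpow s t m" using that by (simp add: tcomp_def)
    have "psrc q = i \<and> ptgt t q = k" if "mkhom s t m c x q \<noteq> 0" for q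
    proof -
      from that x have "(\<Sum>p\<in>paths s t m. x p * c (p, q)) \<noteq> 0"
        by (auto simp: mkhom_def)
      then obtain p where "x p * c (p, q) \<noteq> 0" using sum_nonzero_ex by force
      then have "x p \<noteq> 0" "c (p, q) \<noteq> 0" by auto
      moreover have "\<forall>p. x p \<noteq> 0 \<longrightarrow> psrc p = i \<and> ptgt t p = k"
        using \<open>x \<in> tcomp s t m i k\<close> unfolding tcomp_def by blast
      moreover have "\<forall>p q. c (p, q) \<noteq> 0 \<longrightarrow> psrc p = psrc q \<and> ptgt t p = ptgt t q"
        using c unfolding gma_def by blast
      ultimately show ?thesis by metis
    qed
    then show ?thesis using into unfolding tcomp_def by blast
  qed
  have out: "mkhom s t m c x = (\<lambda>_. 0)" if "x \<notin> tpow s t m" for x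
    using that by (simp add: mkhom_def)
  show ?thesis unfolding homP_def using into add sc gr out by blast
qed

lemma Phi_mkhom:
  fixes c :: "(('j::finite \<times> 'e::finite list) \<times> ('j \<times> 'e list)) \<Rightarrow> 'k::field"
  assumes c: "c \<in> gma s t m n"
  shows "PhiM m n (mkhom s t m c) = c"
proof
  fix b :: "('j \<times> 'e list) \<times> ('j \<times> 'e list)"
  obtain p q where b: "b = (p, q)" by (cases b)
  show "PhiM m n (mkhom s t m c) b = c b"
  proof (cases "p \<in> paths s t m")
    case True
    then have "(basisvec p :: _ \<Rightarrow> 'k) \<in> tpow s t m" by (simp only: basisvec_tpow)
    then have "PhiM m n (mkhom s t m c) b = (\<Sum>p'\<in>paths s t m. basisvec p p' * c (p', q))"
      by (simp add: PhiM_def mkhom_def b)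
    also have "\<dots> = (\<Sum>p'\<in>paths s t m. if p' = p then c (p, q) else 0)"
      by (rule sum.cong) (auto simp: basisvec_def)
    also have "\<dots> = c (p, q)" using True by (simp add: finite_paths)
    finally show ?thesis by (simp add: b)
  next
    case False
    then have "(basisvec p :: _ \<Rightarrow> 'k) \<notin> tpow s t m" by (metis basisvec_tpow)
    then have "PhiM m n (mkhom s t m c) b = 0"
      by (simp add: PhiM_def mkhom_def b)
    moreover have "c b = 0" using c False unfolding gma_def b by blast
    ultimately show ?thesis by simp
  qed
qed

lemma Phi_gma:
  fixes f :: "(('j::finite \<times> 'e::finite list) \<Rightarrow> 'k::field) \<Rightarrow> (('j \<times> 'e list) \<Rightarrow> 'k)"
  assumes f: "f \<in> homP s t m n"
  shows "PhiM m n f \<in> gma s t m n"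
  unfolding gma_def
proof (intro CollectI allI impI)
  fix p q assume nz: "PhiM m n f (p, q) \<noteq> 0"
  then have nz': "f (basisvec p) q \<noteq> 0" by (simp add: PhiM_def)
  have "p \<in> paths s t m"
  proof (rule ccontr)
    assume "p \<notin> paths s t m"
    then have "(basisvec p :: _ \<Rightarrow> 'k) \<notin> tpow s t m" by (metis basisvec_tpow)
    then have "f (basisvec p) = (\<lambda>_. 0)" using f unfolding homP_def by blast
    then show False using nz' by simp
  qed
  then have bp: "(basisvec p :: _ \<Rightarrow> 'k) \<in> tpow s t m" by (simp only: basisvec_tpow)
  then have "(basisvec p :: _ \<Rightarrow> 'k) \<in> tcomp s t m (psrc p) (ptgt t p)"
    by (auto simp: tcomp_def basisvec_def)
  then have "f (basisvec p) \<in> tcomp s t n (psrc p) (ptgt t p)" using f unfolding homP_def by blast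
  then have "\<forall>pa. f (basisvec p) pa \<noteq> 0 \<longrightarrow> pa \<in> paths s t n \<and> psrc pa = psrc p \<and> ptgt t pa = ptgt t p"
    unfolding tcomp_def tpow_def by blast
  then show "p \<in> paths s t m \<and> q \<in> paths s t n \<and> psrc p = psrc q \<and> ptgt t p = ptgt t q"
    using nz' \<open>p \<in> paths s t m\<close> by metis
qed

lemma Phi_inj:
  fixes f g :: "(('j::finite \<times> 'e::finite list) \<Rightarrow> 'k::field) \<Rightarrow> (('j \<times> 'e list) \<Rightarrow> 'k)"
  assumes f: "f \<in> homP s t m n" and g: "g \<in> homP s t m n" and eq: "PhiM m n f = PhiM m n g"
  shows "f = g"
proof
  fix x
  have "f (basisvec p) q = g (basisvec p) q" for p q
    using fun_cong[OF eq, of "(p, q)"] by (simp add: PhiM_def)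
  then show "f x = g x"
    using f g homP_expand[OF f, of x] homP_expand[OF g, of x] unfolding homP_def by (cases "x \<in> tpow s t m") auto
qed

lemma Phi_bij:
  "bij_betw (PhiM m n) (homP (s::'e::finite \<Rightarrow> 'j::finite) t m n) (gma s t m n :: (_ \<Rightarrow> 'k::field) set)"
  unfolding bij_betw_def
proof
  show "inj_on (PhiM m n) (homP s t m n)" by (auto intro: inj_onI Phi_inj)
  show "PhiM m n ` homP s t m n = (gma s t m n :: (_ \<Rightarrow> 'k::field) set)"
  proof
    show "PhiM m n ` homP s t m n \<subseteq> (gma s t m n :: (_ \<Rightarrow> 'k::field) set)" using Phi_gma by blast
    show "(gma s t m n :: (_ \<Rightarrow> 'k::field) set) \<subseteq> PhiM m n ` homP s t m n"
    proof
      fix c :: "_ \<Rightarrow> 'k" assume "c \<in> gma s t m n"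
      then show "c \<in> PhiM m n ` homP s t m n"
        using Phi_mkhom mkhom_homP by (metis image_eqI)
    qed
  qed
qed

lemma gma_states_Nil: "gma_states s t ins [] w = (\<lambda>p. [p]) ` paths s t w"
proof (intro set_eqI iffI)
  fix x assume "x \<in> gma_states s t ins [] w"
  then have "length x = 1" "x ! 0 \<in> paths s t w" by (auto simp: gma_states_def)
  then show "x \<in> (\<lambda>p. [p]) ` paths s t w"
    by (cases x) auto
qed (auto simp: gma_states_def)

lemma gma_states_Cons:
  "\<sigma>s \<in> gma_states s t ins ((l, i, r) # Ls) w \<longleftrightarrow>
   (\<exists>p \<sigma>s'. \<sigma>s = p # \<sigma>s' \<and> p \<in> paths s t w \<and>
      layer_ok s t l r (fst (ins ! i)) (snd (ins ! i)) p (\<sigma>s' ! 0) \<and>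
      \<sigma>s' \<in> gma_states s t ins Ls (l + snd (ins ! i) + r))"
proof
  assume H: "\<sigma>s \<in> gma_states s t ins ((l, i, r) # Ls) w"
  then obtain p \<sigma>s' where e: "\<sigma>s = p # \<sigma>s'"
    by (cases \<sigma>s) (auto simp: gma_states_def)
  have len: "length \<sigma>s' = Suc (length Ls)" using H e by (simp add: gma_states_def)
  have all: "\<forall>u<Suc (length Ls). case ((l, i, r) # Ls) ! u of (l, i, r) \<Rightarrow>
         layer_ok s t l r (fst (ins ! i)) (snd (ins ! i)) (\<sigma>s ! u) (\<sigma>s ! Suc u)"
    using H by (simp add: gma_states_def)
  from all[rule_format, of 0] have ok: "layer_ok s t l r (fst (ins ! i)) (snd (ins ! i)) p (\<sigma>s' ! 0)"
    by (simp add: e)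
  have rest: "\<forall>u<length Ls. case Ls ! u of (l, i, r) \<Rightarrow>
         layer_ok s t l r (fst (ins ! i)) (snd (ins ! i)) (\<sigma>s' ! u) (\<sigma>s' ! Suc u)"
  proof (intro allI impI)
    fix u assume "u < length Ls"
    then show "case Ls ! u of (l, i, r) \<Rightarrow>
         layer_ok s t l r (fst (ins ! i)) (snd (ins ! i)) (\<sigma>s' ! u) (\<sigma>s' ! Suc u)"
      using all[rule_format, of "Suc u"] by (simp add: e)
  qed
  have "\<sigma>s' ! 0 \<in> paths s t (l + snd (ins ! i) + r)" using ok by (simp add: layer_ok_def)
  then show "\<exists>p \<sigma>s'. \<sigma>s = p # \<sigma>s' \<and> p \<in> paths s t w \<and>
      layer_ok s t l r (fst (ins ! i)) (snd (ins ! i)) p (\<sigma>s' ! 0) \<and>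
      \<sigma>s' \<in> gma_states s t ins Ls (l + snd (ins ! i) + r)"
    using H e ok rest len by (auto simp: gma_states_def)
next
  assume "\<exists>p \<sigma>s'. \<sigma>s = p # \<sigma>s' \<and> p \<in> paths s t w \<and>
      layer_ok s t l r (fst (ins ! i)) (snd (ins ! i)) p (\<sigma>s' ! 0) \<and>
      \<sigma>s' \<in> gma_states s t ins Ls (l + snd (ins ! i) + r)"
  then obtain p \<sigma>s' where e: "\<sigma>s = p # \<sigma>s'" and p: "p \<in> paths s t w"
    and ok: "layer_ok s t l r (fst (ins ! i)) (snd (ins ! i)) p (\<sigma>s' ! 0)"
    and st: "\<sigma>s' \<in> gma_states s t ins Ls (l + snd (ins ! i) + r)" by blast
  have "case ((l, i, r) # Ls) ! u of (l, i, r) \<Rightarrow>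
         layer_ok s t l r (fst (ins ! i)) (snd (ins ! i)) (\<sigma>s ! u) (\<sigma>s ! Suc u)"
    if "u < Suc (length Ls)" for u
  proof (cases u)
    case 0 then show ?thesis using ok e by simp
  next
    case (Suc u') then show ?thesis using that st e by (auto simp: gma_states_def)
  qed
  then show "\<sigma>s \<in> gma_states s t ins ((l, i, r) # Ls) w"
    using e p st by (simp add: gma_states_def)
qed

lemma finite_gma_states: "finite (gma_states (s::'e::finite \<Rightarrow> 'j::finite) t ins Ls w)"
proof (induction Ls arbitrary: w)
  case Nil
  then show ?case by (simp add: gma_states_Nil finite_paths)
next
  case (Cons L Ls)
  obtain l i r where L: "L = (l, i, r)" by (cases L)
  have "gma_states s t ins (L # Ls) w \<subseteq>
        (\<lambda>(p, \<sigma>s'). p # \<sigma>s') ` (paths s t w \<times> gma_states s t ins Ls (l + snd (ins ! i) + r))"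
    unfolding L by (auto simp: gma_states_Cons)
  moreover have "finite ((\<lambda>(p, \<sigma>s'). p # \<sigma>s') ` (paths s t w \<times> gma_states s t ins Ls (l + snd (ins ! i) + r)))"
    using Cons.IH finite_paths by blast
  ultimately show ?case by (rule finite_subset)
qed

lemma box_state_Cons0:
  "box_state t ins ((l, i, r) # Ls) (p # \<sigma>s') 0 =
     (subpath t l (fst (ins ! i)) p, subpath t l (snd (ins ! i)) (\<sigma>s' ! 0))"
  by (simp add: box_state_def)

lemma box_state_ConsSuc:
  "box_state t ins ((l, i, r) # Ls) (p # \<sigma>s') (Suc u) = box_state t ins Ls \<sigma>s' u"
  by (simp add: box_state_def)

lemma actG_Nil:
  "actG s t ins [] w cs (p, q) = (if p \<in> paths s t w \<and> p = q then 1 else 0)"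
proof -
  have "{\<sigma>s \<in> gma_states s t ins [] w. \<sigma>s ! 0 = p \<and> last \<sigma>s = q} =
        (if p \<in> paths s t w \<and> p = q then {[p]} else {})"
    by (auto simp: gma_states_Nil)
  then show ?thesis by (auto simp: actG_def)
qed

lemma actG_Cons:
  fixes s t :: "'e::finite \<Rightarrow> 'j::finite" and cs :: "nat \<Rightarrow> _ \<Rightarrow> 'k::field"
  assumes w: "w = l + fst (ins ! i) + r"
  shows "actG s t ins ((l, i, r) # Ls) w cs (p, q) =
    (\<Sum>z\<in>paths s t (l + snd (ins ! i) + r).
       if layer_ok s t l r (fst (ins ! i)) (snd (ins ! i)) p z
       then cs i (subpath t l (fst (ins ! i)) p, subpath t l (snd (ins ! i)) z) *
            actG s t ins Ls (l + snd (ins ! i) + r) cs (z, q)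
       else 0)"
proof -
  define m where "m = fst (ins ! i)"
  define n where "n = snd (ins ! i)"
  define w' where "w' = l + n + r"
  define G where "G \<sigma>s' = (\<Prod>u<length Ls. cs (case Ls ! u of (l, i, r) \<Rightarrow> i) (box_state t ins Ls \<sigma>s' u))" for \<sigma>s'
  define T where "T = {\<sigma>s' \<in> gma_states s t ins Ls w'. layer_ok s t l r m n p (\<sigma>s' ! 0) \<and> last \<sigma>s' = q}"
  define F where "F z = cs i (subpath t l m p, subpath t l n z)" for z
  have St: "{\<sigma>s \<in> gma_states s t ins ((l, i, r) # Ls) w. \<sigma>s ! 0 = p \<and> last \<sigma>s = q} = (Cons p) ` T"
  proof (intro set_eqI iffI)
    fix \<sigma>s assume "\<sigma>s \<in> {\<sigma>s \<in> gma_states s t ins ((l, i, r) # Ls) w. \<sigma>s ! 0 = p \<and> last \<sigma>s = q}"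
    then obtain \<sigma>s' where e: "\<sigma>s = p # \<sigma>s'" and ok: "layer_ok s t l r m n p (\<sigma>s' ! 0)"
      and st: "\<sigma>s' \<in> gma_states s t ins Ls w'" and lq: "last \<sigma>s = q"
      unfolding gma_states_Cons m_def n_def w'_def by auto
    have "\<sigma>s' \<noteq> []" using st by (auto simp: gma_states_def)
    then have "last \<sigma>s' = q" using lq e by simp
    then show "\<sigma>s \<in> Cons p ` T" using e ok st unfolding T_def by blast
  next
    fix \<sigma>s assume "\<sigma>s \<in> Cons p ` T"
    then obtain \<sigma>s' where e: "\<sigma>s = p # \<sigma>s'" and ok: "layer_ok s t l r m n p (\<sigma>s' ! 0)"
      and st: "\<sigma>s' \<in> gma_states s t ins Ls w'" and lq: "last \<sigma>s' = q"
      unfolding T_def by blast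
    have "\<sigma>s' \<noteq> []" using st by (auto simp: gma_states_def)
    then have lq': "last \<sigma>s = q" using lq e by simp
    have "p \<in> paths s t w" using ok w by (simp add: layer_ok_def m_def)
    then have "\<sigma>s \<in> gma_states s t ins ((l, i, r) # Ls) w"
      using e ok st unfolding gma_states_Cons m_def n_def w'_def by blast
    then show "\<sigma>s \<in> {\<sigma>s \<in> gma_states s t ins ((l, i, r) # Ls) w. \<sigma>s ! 0 = p \<and> last \<sigma>s = q}"
      using e lq' by simp
  qed
  have prod_eq: "(\<Prod>u<Suc (length Ls). cs (case ((l, i, r) # Ls) ! u of (l, i, r) \<Rightarrow> i)
                   (box_state t ins ((l, i, r) # Ls) (p # \<sigma>s') u)) = F (\<sigma>s' ! 0) * G \<sigma>s'" for \<sigma>s'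
    unfolding prod.lessThan_Suc_shift
    by (simp add: box_state_Cons0 box_state_ConsSuc F_def G_def m_def n_def del: prod.lessThan_Suc)
  have finT: "finite T" unfolding T_def by (rule finite_subset[OF _ finite_gma_states]) blast
  have "actG s t ins ((l, i, r) # Ls) w cs (p, q) = (\<Sum>\<sigma>s'\<in>T. F (\<sigma>s' ! 0) * G \<sigma>s')"
    unfolding actG_def by (simp add: St sum.reindex prod_eq del: prod.lessThan_Suc length_Cons)
  also have "\<dots> = (\<Sum>z\<in>paths s t w'. \<Sum>\<sigma>s'\<in>{x. x \<in> T \<and> x ! 0 = z}. F (\<sigma>s' ! 0) * G \<sigma>s')"
    by (rule sum.group[symmetric]) (use finT finite_paths in \<open>auto simp: T_def gma_states_def\<close>)
  also have "\<dots> = (\<Sum>z\<in>paths s t w'. if layer_ok s t l r m n p z then F z * actG s t ins Ls w' cs (z, q) else 0)"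
  proof (rule sum.cong[OF refl])
    fix z
    have "{x. x \<in> T \<and> x ! 0 = z} =
      (if layer_ok s t l r m n p z then {\<sigma>s \<in> gma_states s t ins Ls w'. \<sigma>s ! 0 = z \<and> last \<sigma>s = q} else {})"
      unfolding T_def by auto
    then show "(\<Sum>\<sigma>s'\<in>{x. x \<in> T \<and> x ! 0 = z}. F (\<sigma>s' ! 0) * G \<sigma>s') =
       (if layer_ok s t l r m n p z then F z * actG s t ins Ls w' cs (z, q) else 0)"
      by (simp add: actG_def G_def sum_distrib_left)
  qed
  finally show ?thesis unfolding F_def m_def n_def w'_def .
qed

lemma walk_split3:
  assumes "walk s t v Z"
  shows "walk s t v (take l Z)" "walk s t (endv t v (take l Z)) (take n (drop l Z))"
    "walk s t (endv t v (take (l + n) Z)) (drop (l + n) Z)"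
    "endv t v (take (l + n) Z) = endv t (endv t v (take l Z)) (take n (drop l Z))"
proof -
  have Z: "Z = take l Z @ take n (drop l Z) @ drop (l + n) Z"
    by (metis append.assoc append_take_drop_id take_add)
  have tk: "take (l + n) Z = take l Z @ take n (drop l Z)" by (simp add: take_add)
  from assms Z have "walk s t v (take l Z @ take n (drop l Z) @ drop (l + n) Z)" by simp
  then show "walk s t v (take l Z)" "walk s t (endv t v (take l Z)) (take n (drop l Z))"
    "endv t v (take (l + n) Z) = endv t (endv t v (take l Z)) (take n (drop l Z))"
    "walk s t (endv t v (take (l + n) Z)) (drop (l + n) Z)"
    by (simp_all add: walk_append endv_append tk)
qed

lemma layer_sum:
  fixes s t :: "'e::finite \<Rightarrow> 'j::finite" and x :: "_ \<Rightarrow> 'k::field"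
  assumes z: "z \<in> paths s t (l + n + r)"
  shows "(\<Sum>p\<in>{p \<in> paths s t m. psrc p = psrc (subpath t l n z) \<and> ptgt t p = ptgt t (subpath t l n z)}.
           x (fst z, take l (snd z) @ snd p @ drop (l + n) (snd z)) * g p)
       = (\<Sum>p\<in>paths s t (l + m + r). if layer_ok s t l r m n p z then x p * g (subpath t l m p) else 0)"
proof -
  obtain v Z where zz: "z = (v, Z)" by (cases z)
  have lenZ: "length Z = l + n + r" and wZ: "walk s t v Z" using z zz by (auto simp: paths_def)
  have W: "walk s t v (take l Z)" "walk s t (endv t v (take l Z)) (take n (drop l Z))"
    "walk s t (endv t v (take (l + n) Z)) (drop (l + n) Z)"
    "endv t v (take (l + n) Z) = endv t (endv t v (take l Z)) (take n (drop l Z))"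
    by (rule walk_split3[OF wZ])+
  define S where "S = {p \<in> paths s t m. psrc p = psrc (subpath t l n z) \<and> ptgt t p = ptgt t (subpath t l n z)}"
  define T where "T = {p \<in> paths s t (l + m + r). layer_ok s t l r m n p z}"
  define jj where "jj p = (v, take l Z @ snd p @ drop (l + n) Z)" for p :: "'j \<times> 'e list"
  have "(\<Sum>p\<in>paths s t (l + m + r). if layer_ok s t l r m n p z then x p * g (subpath t l m p) else 0)
      = (\<Sum>p\<in>T. x p * g (subpath t l m p))"
    unfolding T_def by (rule sum.inter_filter[symmetric, OF finite_paths])
  moreover have "(\<Sum>p\<in>S. x (jj p) * g p) = (\<Sum>p\<in>T. x p * g (subpath t l m p))"
  proof (rule sum.reindex_bij_witness[where i = "subpath t l m" and j = jj])
    fix a assume a: "a \<in> S"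
    obtain a1 A where aa: "a = (a1, A)" by (cases a)
    have lenA: "length A = m" and wA: "walk s t a1 A"
      and a1: "a1 = endv t v (take l Z)"
      and ea: "endv t a1 A = endv t v (take (l + n) Z)"
      using a aa W(4) by (auto simp: S_def paths_def psrc_def ptgt_def subpath_def zz)
    show ia: "subpath t l m (jj a) = a"
      using lenZ lenA a1 by (simp add: subpath_def jj_def aa)
    then show "x (jj a) * g (subpath t l m (jj a)) = x (jj a) * g a" by simp
    have "jj a \<in> paths s t (l + m + r)"
      using lenZ lenA W wA a1 ea by (simp add: jj_def aa paths_def walk_append endv_append)
    moreover have "layer_ok s t l r m n (jj a) z"
    proof -
      have "endv t v Z = endv t (endv t v (take (l + n) Z)) (drop (l + n) Z)"
        by (metis append_take_drop_id endv_append)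
      then show ?thesis
        using \<open>jj a \<in> paths s t (l + m + r)\<close> z lenZ lenA a1 ea
        by (simp add: layer_ok_def jj_def aa zz ptgt_def endv_append)
    qed
    ultimately show "jj a \<in> T" unfolding T_def by blast
  next
    fix b assume b: "b \<in> T"
    obtain b1 B where bb: "b = (b1, B)" by (cases b)
    have lenB: "length B = l + m + r" and wB: "walk s t b1 B" and b1: "b1 = v"
      and eb: "endv t b1 B = endv t v Z" and tl: "take l B = take l Z"
      and dr: "drop (l + m) B = drop (l + n) Z"
      using b bb zz by (auto simp: T_def paths_def layer_ok_def ptgt_def)
    have WB: "walk s t b1 (take l B)" "walk s t (endv t b1 (take l B)) (take m (drop l B))"
      "walk s t (endv t b1 (take (l + m) B)) (drop (l + m) B)"
      "endv t b1 (take (l + m) B) = endv t (endv t b1 (take l B)) (take m (drop l B))"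
      by (rule walk_split3[OF wB])+
    have "jj (subpath t l m b) = (v, take l B @ take m (drop l B) @ drop (l + m) B)"
      by (simp add: jj_def subpath_def bb tl dr)
    also have "\<dots> = b" using b1 bb
      by (metis append.assoc append_take_drop_id take_add)
    finally show "jj (subpath t l m b) = b" .
    have e1: "endv t b1 B = endv t (endv t b1 (take (l + m) B)) (drop (l + m) B)"
      by (metis append_take_drop_id endv_append)
    have e2: "endv t v Z = endv t (endv t v (take (l + n) Z)) (drop (l + n) Z)"
      by (metis append_take_drop_id endv_append)
    have "endv t b1 (take (l + m) B) = endv t v (take (l + n) Z)"
      by (rule walk_endv_inj[of s t _ "drop (l + m) B"]) (use WB(3) W(3) dr e1 e2 eb in auto)
    then show "subpath t l m b \<in> S"
      using lenB WB b1 tl W(4)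
      by (simp add: S_def subpath_def bb zz paths_def psrc_def ptgt_def)
  qed
  ultimately show ?thesis unfolding S_def jj_def zz by simp
qed

lemma main_layers:
  fixes s t :: "'e::finite \<Rightarrow> 'j::finite"
    and fs :: "nat \<Rightarrow> ((('j \<times> 'e list) \<Rightarrow> 'k::field) \<Rightarrow> (('j \<times> 'e list) \<Rightarrow> 'k))"
  assumes "widths_ok ins w Ls n0" "x \<in> tpow s t w"
  shows "actP_layers s t ins fs Ls x q =
    (\<Sum>p\<in>paths s t w. x p * actG s t ins Ls w (\<lambda>i. PhiM (fst (ins ! i)) (snd (ins ! i)) (fs i)) (p, q))"
  using assms
proof (induction Ls arbitrary: w x)
  case Nil
  have "(\<Sum>p\<in>paths s t w. x p * actG s t ins [] w (\<lambda>i. PhiM (fst (ins ! i)) (snd (ins ! i)) (fs i)) (p, q))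
      = (\<Sum>p\<in>paths s t w. if p = q then x q else 0)"
    by (rule sum.cong) (auto simp: actG_Nil)
  also have "\<dots> = x q"
  proof -
    have "q \<notin> paths s t w \<Longrightarrow> x q = 0" using Nil.prems(2) unfolding tpow_def by blast
    then show ?thesis by (auto simp: finite_paths)
  qed
  finally show ?case by simp
next
  case (Cons L Ls)
  obtain l i r where L: "L = (l, i, r)" by (cases L)
  define m where "m = fst (ins ! i)"
  define n where "n = snd (ins ! i)"
  define cs where "cs = (\<lambda>i. PhiM (fst (ins ! i)) (snd (ins ! i)) (fs i))"
  have w: "w = l + m + r" and wo: "widths_ok ins (l + n + r) Ls n0"
    using Cons.prems(1) by (auto simp: L m_def n_def)
  define y where "y = layer_app s t l r m n (fs i) x"
  have y: "y \<in> tpow s t (l + n + r)" by (auto simp: y_def layer_app_def tpow_def)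
  define A where "A z = actG s t ins Ls (l + n + r) cs (z, q)" for z
  have "actP_layers s t ins fs (L # Ls) x q = actP_layers s t ins fs Ls y q"
    by (simp add: L y_def m_def n_def)
  also have "\<dots> = (\<Sum>z\<in>paths s t (l + n + r). y z * A z)"
    using Cons.IH[OF wo y] by (simp add: A_def cs_def)
  also have "\<dots> = (\<Sum>z\<in>paths s t (l + n + r). (\<Sum>p\<in>paths s t w.
        if layer_ok s t l r m n p z then x p * fs i (basisvec (subpath t l m p)) (subpath t l n z) else 0) * A z)"
  proof (rule sum.cong[OF refl])
    fix z assume z: "z \<in> paths s t (l + n + r)"
    show "y z * A z = (\<Sum>p\<in>paths s t w.
        if layer_ok s t l r m n p z then x p * fs i (basisvec (subpath t l m p)) (subpath t l n z) else 0) * A z"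
      using layer_sum[OF z, where m=m and x=x and g="\<lambda>p. fs i (basisvec p) (subpath t l n z)"] z w
      by (simp add: y_def layer_app_def)
  qed
  also have "\<dots> = (\<Sum>z\<in>paths s t (l + n + r). \<Sum>p\<in>paths s t w.
        if layer_ok s t l r m n p z then x p * (cs i (subpath t l m p, subpath t l n z) * A z) else 0)"
    by (auto simp: sum_distrib_right cs_def PhiM_def m_def n_def intro!: sum.cong)
  also have "\<dots> = (\<Sum>p\<in>paths s t w. \<Sum>z\<in>paths s t (l + n + r).
        if layer_ok s t l r m n p z then x p * (cs i (subpath t l m p, subpath t l n z) * A z) else 0)"
    by (rule sum.swap)
  also have "\<dots> = (\<Sum>p\<in>paths s t w. x p * actG s t ins (L # Ls) w cs (p, q))"
  proof (rule sum.cong[OF refl])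
    fix p
    show "(\<Sum>z\<in>paths s t (l + n + r).
        if layer_ok s t l r m n p z then x p * (cs i (subpath t l m p, subpath t l n z) * A z) else 0)
        = x p * actG s t ins (L # Ls) w cs (p, q)"
      unfolding L actG_Cons[OF w[unfolded m_def]]
      by (auto simp: sum_distrib_left A_def m_def n_def intro!: sum.cong)
  qed
  finally show ?case by (simp add: cs_def)
qed

lemma actG_notpath:
  "p \<notin> paths s t w \<Longrightarrow> actG s t ins Ls w cs (p, q) = 0"
proof -
  assume "p \<notin> paths s t w"
  then have "{\<sigma>s \<in> gma_states s t ins Ls w. \<sigma>s ! 0 = p \<and> last \<sigma>s = q} = {}"
    by (auto simp: gma_states_def)
  then show ?thesis unfolding actG_def prod.case by (simp only: sum.empty)
qed

lemma tangle_compat: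
  fixes s t :: "'e::finite \<Rightarrow> 'j::finite"
    and fs :: "nat \<Rightarrow> ((('j \<times> 'e list) \<Rightarrow> 'k::field) \<Rightarrow> (('j \<times> 'e list) \<Rightarrow> 'k))"
  assumes wf: "wf_tangle ins Ls m0 n0"
  shows "PhiM m0 n0 (actP s t ins Ls m0 fs) =
         actG s t ins Ls m0 (\<lambda>i. PhiM (fst (ins ! i)) (snd (ins ! i)) (fs i))"
proof
  fix b :: "('j \<times> 'e list) \<times> ('j \<times> 'e list)"
  obtain p0 q0 where b: "b = (p0, q0)" by (cases b)
  have wo: "widths_ok ins m0 Ls n0" using wf by (simp add: wf_tangle_def)
  show "PhiM m0 n0 (actP s t ins Ls m0 fs) b = actG s t ins Ls m0 (\<lambda>i. PhiM (fst (ins ! i)) (snd (ins ! i)) (fs i)) b"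
  proof (cases "p0 \<in> paths s t m0")
    case True
    then have bp: "(basisvec p0 :: _ \<Rightarrow> 'k) \<in> tpow s t m0" by (simp only: basisvec_tpow)
    have "PhiM m0 n0 (actP s t ins Ls m0 fs) b = actP_layers s t ins fs Ls (basisvec p0) q0"
      using bp by (simp add: PhiM_def actP_def b)
    also have "\<dots> = (\<Sum>p\<in>paths s t m0. basisvec p0 p * actG s t ins Ls m0 (\<lambda>i. PhiM (fst (ins ! i)) (snd (ins ! i)) (fs i)) (p, q0))"
      by (rule main_layers[OF wo bp])
    also have "\<dots> = (\<Sum>p\<in>paths s t m0. if p = p0 then actG s t ins Ls m0 (\<lambda>i. PhiM (fst (ins ! i)) (snd (ins ! i)) (fs i)) (p0, q0) else 0)"
      by (rule sum.cong) (auto simp: basisvec_def)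
    also have "\<dots> = actG s t ins Ls m0 (\<lambda>i. PhiM (fst (ins ! i)) (snd (ins ! i)) (fs i)) b"
      using True by (simp add: finite_paths b)
    finally show ?thesis .
  next
    case False
    then have "(basisvec p0 :: _ \<Rightarrow> 'k) \<notin> tpow s t m0" by (metis basisvec_tpow)
    then have "PhiM m0 n0 (actP s t ins Ls m0 fs) b = 0" by (simp add: PhiM_def actP_def b)
    moreover have "actG s t ins Ls m0 (\<lambda>i. PhiM (fst (ins ! i)) (snd (ins ! i)) (fs i)) b = 0"
      using False by (simp add: b actG_notpath)
    ultimately show ?thesis by simp
  qed
qed

theorem theorem3p35:
  fixes s t :: "'e::finite \<Rightarrow> 'j::finite"
  assumes "connected_bigraded (Vcomp s t :: 'j \<Rightarrow> 'j \<Rightarrow> ('e \<Rightarrow> 'k::field) set)"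
  shows "\<exists>\<Phi> :: nat \<Rightarrow> nat \<Rightarrow> ((('j \<times> 'e list) \<Rightarrow> 'k) \<Rightarrow> (('j \<times> 'e list) \<Rightarrow> 'k))
              \<Rightarrow> ((('j \<times> 'e list) \<times> ('j \<times> 'e list)) \<Rightarrow> 'k).
           monoidal_iso_P_GMA s t \<Phi>"
proof
  show "monoidal_iso_P_GMA s t (PhiM :: nat \<Rightarrow> nat \<Rightarrow> ((('j \<times> 'e list) \<Rightarrow> 'k) \<Rightarrow> (('j \<times> 'e list) \<Rightarrow> 'k))
              \<Rightarrow> ((('j \<times> 'e list) \<times> ('j \<times> 'e list)) \<Rightarrow> 'k))"
    unfolding monoidal_iso_P_GMA_def
    using Phi_bij tangle_compat by (auto simp: PhiM_def)
qed

end
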